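(* Let $\lambda\in[-1,1)$ and let $\gamma:I\to\mathbb{R}^d$ be a $\lambda$-eel. Then for every $t_1\in I$, the function $t\mapsto\|\gamma(t_1)-\gamma(t)\|+\lambda\,\ell(\gamma|_{[t_1,t]})$ is non-decreasing on $I\cap[t_1,\infty)$.
   Context: $\mathbb{R}^d$ carries the Euclidean inner product $\langle\cdot,\cdot\rangle$ and norm $\|\cdot\|$; $I\subset\mathbb{R}$ is an interval. A $\lambda$-eel is a continuous curve $\gamma:I\to\mathbb{R}^d$ with a nonzero right derivative $\gamma'(\tau)$ at each point such that for all $t<\tau$ in $I$: $\langle\gamma'(\tau),\gamma(t)-\gamma(\tau)\rangle\le\lambda\|\gamma'(\tau)\|\|\gamma(t)-\gamma(\tau)\|$. $\ell(\gamma|_{[t_1,t]})$ is the length of the restriction, $\sup\sum\|\gamma(s_i)-\gamma(s_{i+1})\|$ over finite increasing sequences in $[t_1,t]$. *)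

theory Defs
  imports "HOL-Analysis.Analysis"
begin

definition curve_length :: "(real \<Rightarrow> 'a::real_normed_vector) \<Rightarrow> real \<Rightarrow> real \<Rightarrow> ereal" where
  "curve_length \<gamma> a b =
     (SUP s \<in> {s :: real list. sorted_wrt (<) s \<and> set s \<subseteq> {a..b}}.
        ereal (\<Sum>i<length s - 1. norm (\<gamma> (s ! i) - \<gamma> (s ! Suc i))))"

definition is_eel :: "real \<Rightarrow> real set \<Rightarrow> (real \<Rightarrow> 'a::real_inner) \<Rightarrow> bool" where
  "is_eel lam I \<gamma> \<longleftrightarrow> is_interval I \<and> continuous_on I \<gamma> \<and>
     (\<exists>\<gamma>'. \<forall>\<tau>\<in>I. (\<gamma> has_vector_derivative \<gamma>' \<tau>) (at \<tau> within (I \<inter> {\<tau>..})) \<and> \<gamma>' \<tau> \<noteq> 0 \<and>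
        (\<forall>t\<in>I. t < \<tau> \<longrightarrow>
           inner (\<gamma>' \<tau>) (\<gamma> t - \<gamma> \<tau>) \<le> lam * norm (\<gamma>' \<tau>) * norm (\<gamma> t - \<gamma> \<tau>)))"

end

theory Submission
  imports Defs
begin

lemma dini:
  fixes F :: "real \<Rightarrow> real"
  assumes ab: "a \<le> b"
    and left: "\<And>c e. a < c \<Longrightarrow> c \<le> b \<Longrightarrow> e > 0 \<Longrightarrow>
       \<exists>d>0. \<forall>x. c - d < x \<and> x < c \<and> a \<le> x \<longrightarrow> F x \<le> F c + e"
    and right: "\<And>c e. a \<le> c \<Longrightarrow> c < b \<Longrightarrow> e > 0 \<Longrightarrow>
       \<exists>d>0. \<forall>y. c < y \<and> y < c + d \<and> y \<le> b \<longrightarrow> F c - e * (y - c) \<le> F y"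
  shows "F a \<le> F b"
proof -
  have main: "F a - e * (b - a) \<le> F b" if e: "e > 0" for e
  proof -
    define S where "S = {x. a \<le> x \<and> x \<le> b \<and> (\<forall>y. a \<le> y \<and> y \<le> x \<longrightarrow> F a - e * (y - a) \<le> F y)}"
    have aS: "a \<in> S" unfolding S_def using ab by auto
    have bdd: "bdd_above S" unfolding S_def bdd_above_def by auto
    define c where "c = Sup S"
    have ac: "a \<le> c" unfolding c_def using aS bdd by (rule cSup_upper)
    have cb: "c \<le> b" unfolding c_def using aS by (intro cSup_least) (auto simp: S_def)
    have below: "F a - e * (y - a) \<le> F y" if "a \<le> y" "y < c" for y
    proof -
      from \<open>y < c\<close> obtain x where "x \<in> S" "y < x"
        unfolding c_def using less_cSup_iff[of S y] aS bdd by auto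
      then show ?thesis unfolding S_def using that by auto
    qed
    have cgood: "F a - e * (c - a) \<le> F c"
    proof (cases "c = a")
      case True then show ?thesis by simp
    next
      case False
      with ac have "a < c" by simp
      show ?thesis
      proof (rule field_le_epsilon)
        fix e' :: real assume "e' > 0"
        from left[OF \<open>a < c\<close> cb this] obtain d where d: "d > 0"
          "\<forall>x. c - d < x \<and> x < c \<and> a \<le> x \<longrightarrow> F x \<le> F c + e'" by blast
        define x where "x = max a (c - d/2)"
        have x: "c - d < x" "x < c" "a \<le> x" unfolding x_def using d(1) \<open>a < c\<close> by auto
        have "F a - e * (x - a) \<le> F x" using below x by auto
        moreover have "F x \<le> F c + e'" using d(2) x by auto
        moreover have "e * (x - a) \<le> e * (c - a)" using x e by (intro mult_left_mono) auto
        ultimately show "F a - e * (c - a) \<le> F c + e'" by linarith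
      qed
    qed
    have cS: "c \<in> S" unfolding S_def using ac cb below cgood
      by (auto simp: order_le_less)
    have "c = b"
    proof (rule ccontr)
      assume "c \<noteq> b"
      with cb have "c < b" by simp
      from right[OF ac this e] obtain d where d: "d > 0"
        "\<forall>y. c < y \<and> y < c + d \<and> y \<le> b \<longrightarrow> F c - e * (y - c) \<le> F y" by blast
      define z where "z = min b (c + d/2)"
      have z: "c < z" "z < c + d" "z \<le> b" unfolding z_def using d(1) \<open>c < b\<close> by auto
      have "z \<in> S"
        unfolding S_def
      proof (intro CollectI conjI allI impI)
        show "a \<le> z" "z \<le> b" using z ac by auto
        fix y assume y: "a \<le> y \<and> y \<le> z"
        show "F a - e * (y - a) \<le> F y"
        proof (cases "y \<le> c")
          case True then show ?thesis using cS y unfolding S_def by auto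
        next
          case False
          then have "F c - e * (y - c) \<le> F y" using d(2) y z by auto
          then show ?thesis using cgood by (simp add: algebra_simps)
        qed
      qed
      then have "z \<le> c" unfolding c_def using bdd by (rule cSup_upper)
      then show False using z by simp
    qed
    then show ?thesis using cS unfolding S_def by auto
  qed
  show ?thesis
  proof (rule field_le_epsilon)
    fix e :: real assume "e > 0"
    have pos: "b - a + 1 > 0" using ab by simp
    have "F a - e / (b - a + 1) * (b - a) \<le> F b" using main[of "e / (b - a + 1)"] \<open>e > 0\<close> pos by simp
    moreover have "e / (b - a + 1) * (b - a) \<le> e"
      using \<open>e > 0\<close> pos ab by (simp add: field_simps)
    ultimately show "F a \<le> F b + e" by linarith
  qed
qed

fun cs :: "(real \<Rightarrow> 'a::real_normed_vector) \<Rightarrow> real list \<Rightarrow> real" where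
  "cs g (x # y # s) = norm (g x - g y) + cs g (y # s)"
| "cs g _ = 0"

lemma cs_eq: "(\<Sum>i<length s - 1. norm (g (s ! i) - g (s ! Suc i))) = cs g s"
proof (induction g s rule: cs.induct)
  case (1 g x y s)
  have "(\<Sum>i<length (x # y # s) - 1. norm (g ((x # y # s) ! i) - g ((x # y # s) ! Suc i)))
     = (\<Sum>i<Suc (length (y # s) - 1). norm (g ((x # y # s) ! i) - g ((x # y # s) ! Suc i)))" by simp
  also have "\<dots> = norm (g x - g y) + (\<Sum>i<length (y # s) - 1. norm (g ((y # s) ! i) - g ((y # s) ! Suc i)))"
    by (subst sum.lessThan_Suc_shift) simp
  finally show ?case using 1 by simp
qed auto

lemma cs_nonneg: "cs g s \<ge> 0"
  by (induction g s rule: cs.induct) auto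

lemma cs_append: "cs g (A @ q # B) = cs g (A @ [q]) + cs g (q # B)"
proof (induction A)
  case (Cons x A)
  then show ?case by (cases A) auto
qed simp

lemma norm_tri3: "norm (u - w) \<le> norm (u - v) + norm (v - (w::'a::real_normed_vector))"
  using norm_triangle_ineq[of "u - v" "v - w"] by simp

lemma cs_split_le: "cs g (A @ B) \<le> cs g (A @ [q]) + cs g (q # B)"
proof (induction A)
  case Nil
  then show ?case by (cases B) auto
next
  case (Cons x A)
  show ?case
  proof (cases A)
    case Nil
    then show ?thesis
    proof (cases B)
      case (Cons z B')
      then show ?thesis using Nil norm_tri3[of "g x" "g z" "g q"] by simp
    qed simp
  next
    case (Cons z A')
    then show ?thesis using Cons.IH by simp
  qed
qed

lemma cs_const: "\<forall>x\<in>set B. x = c \<Longrightarrow> cs g (c # B) = 0"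
  by (induction B) auto

lemma cs_G:
  assumes "sorted l" "l \<noteq> []"
    and "\<And>x y. x \<in> set l \<Longrightarrow> y \<in> set l \<Longrightarrow> x \<le> y \<Longrightarrow> norm (g y - g x) \<le> G y - G x"
  shows "cs g l \<le> G (last l) - G (hd l)"
  using assms
proof (induction g l rule: cs.induct)
  case (1 g x y s)
  have "cs g (y # s) \<le> G (last (y # s)) - G y" using 1 by auto
  moreover have "norm (g y - g x) \<le> G y - G x" using 1 by auto
  ultimately show ?case by (simp add: norm_minus_commute)
qed auto

lemma sorted_split:
  assumes "sorted_wrt (<) (s::real list)"
  shows "s = filter (\<lambda>x. x < a) s @ filter (\<lambda>x. \<not> x < a) s"
  using assms
proof (induction s)
  case (Cons x s)
  show ?case
  proof (cases "x < a")
    case True then show ?thesis using Cons by simp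
  next
    case False
    then have "\<forall>y\<in>set s. \<not> y < a" using Cons.prems by fastforce
    then show ?thesis using False by (simp add: filter_False)
  qed
qed simp

lemma key:
  fixes g :: "real \<Rightarrow> 'a::real_inner"
  assumes der: "(g has_vector_derivative v) (at c within (I \<inter> {c..}))"
    and eel: "\<forall>t\<in>I. t < c \<longrightarrow> inner v (g t - g c) \<le> lam * norm v * norm (g t - g c)"
    and t1: "t1 \<le> c" "t1 \<in> I" and lam: "-1 \<le> lam" and dp: "dl > 0"
  shows "\<exists>d>0. \<forall>y\<in>I. c < y \<and> y < c + d \<longrightarrow>
      norm (g t1 - g c) - lam * (y - c) * norm v - dl * (y - c) \<le> norm (g t1 - g y) \<and>
      norm (g y - g c) \<le> (y - c) * norm v + dl * (y - c) \<and>
      (y - c) * norm v - dl * (y - c) \<le> norm (g y - g c)"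
proof -
  from der have "(g has_derivative (\<lambda>x. x *\<^sub>R v)) (at c within (I \<inter> {c..}))"
    by (simp add: has_vector_derivative_def)
  then obtain d where d: "d > 0"
    "\<forall>y\<in>I \<inter> {c..}. norm (y - c) < d \<longrightarrow> norm (g y - g c - (y - c) *\<^sub>R v) \<le> dl * norm (y - c)"
    using dp unfolding has_derivative_within_alt by blast
  show ?thesis
  proof (intro exI[of _ d] conjI ballI impI d(1))
    fix y assume yI: "y \<in> I" and yc: "c < y \<and> y < c + d"
    define h where "h = y - c"
    have hp: "h > 0" using yc h_def by simp
    define r where "r = g y - g c - h *\<^sub>R v"
    have nr: "norm r \<le> dl * h" using d(2) yI yc unfolding r_def h_def by auto
    have gy: "g y - g c = h *\<^sub>R v + r" unfolding r_def by simp
    have nhv: "norm (h *\<^sub>R v) = h * norm v" using hp by simp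
    have "norm (g y - g c) \<le> norm (h *\<^sub>R v) + norm r" unfolding gy by (rule norm_triangle_ineq)
    then have "norm (g y - g c) \<le> h * norm v + dl * h" using nr nhv by linarith
    then show n1: "norm (g y - g c) \<le> (y - c) * norm v + dl * (y - c)"
      using h_def by simp
    have "norm (h *\<^sub>R v) \<le> norm (g y - g c) + norm r"
      using norm_triangle_ineq4[of "g y - g c" r] gy by (simp add: algebra_simps)
    then have "h * norm v - dl * h \<le> norm (g y - g c)" using nr nhv by linarith
    then show n2: "(y - c) * norm v - dl * (y - c) \<le> norm (g y - g c)"
      using h_def by simp
    show "norm (g t1 - g c) - lam * (y - c) * norm v - dl * (y - c) \<le> norm (g t1 - g y)"
    proof (cases "g c = g t1")
      case True
      have "-(h * norm v) \<le> lam * (h * norm v)"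
        using lam hp mult_right_mono[of "-1" lam "h * norm v"] by simp
      then show ?thesis using n2 True h_def by (simp add: norm_minus_commute algebra_simps)
    next
      case False
      then have "t1 \<noteq> c" by auto
      with t1 have "t1 < c" by simp
      define w where "w = g c - g t1"
      have nw: "norm w > 0" using False unfolding w_def by simp
      have e1: "inner v (g t1 - g c) \<le> lam * norm v * norm (g t1 - g c)" using eel t1 \<open>t1 < c\<close> by auto
      have e2: "- inner v w \<le> lam * norm v * norm w"
        using e1 unfolding w_def by (simp add: norm_minus_commute inner_diff_right)
      have gyt: "g y - g t1 = w + h *\<^sub>R v + r" using gy unfolding w_def by (simp add: algebra_simps)
      have cs1: "inner (g y - g t1) w \<le> norm (g y - g t1) * norm w" by (rule norm_cauchy_schwarz)
      have ir: "- (norm r * norm w) \<le> inner r w"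
        using norm_cauchy_schwarz[of "-r" w] by simp
      have "inner (g y - g t1) w = norm w * norm w + h * inner v w + inner r w"
        unfolding gyt by (simp add: inner_add_left power2_eq_square flip: power2_norm_eq_inner)
      moreover have "h * (- inner v w) \<le> h * (lam * norm v * norm w)"
        using e2 hp by (intro mult_left_mono) auto
      moreover have "norm r * norm w \<le> dl * h * norm w" using nr nw by (intro mult_right_mono) auto
      ultimately have "norm w * (norm w - lam * h * norm v - dl * h) \<le> norm w * norm (g y - g t1)"
        using cs1 ir by (simp add: algebra_simps)
      then have "norm w - lam * h * norm v - dl * h \<le> norm (g y - g t1)"
        using nw by (simp add: mult_le_cancel_left_pos)
      then show ?thesis unfolding w_def h_def by (simp add: norm_minus_commute)
    qed
  qed
qed

lemma cl_nonneg: "curve_length g a b \<ge> 0"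
  unfolding curve_length_def by (rule SUP_upper2[of "[]"]) auto

lemma cl_mono: "b \<le> b' \<Longrightarrow> curve_length g a b \<le> curve_length g a b'"
  unfolding curve_length_def by (rule SUP_subset_mono) auto

lemma cl_upper: "sorted_wrt (<) s \<Longrightarrow> set s \<subseteq> {a..b} \<Longrightarrow> ereal (cs g s) \<le> curve_length g a b"
  unfolding curve_length_def cs_eq[symmetric] by (rule SUP_upper) auto

lemma cl_le: "(\<And>s. sorted_wrt (<) s \<Longrightarrow> set s \<subseteq> {a..b} \<Longrightarrow> cs g s \<le> B) \<Longrightarrow> curve_length g a b \<le> ereal B"
  unfolding curve_length_def cs_eq by (rule SUP_least) auto

lemma real_le: "0 \<le> x \<Longrightarrow> x \<le> ereal r \<Longrightarrow> real_of_ereal x \<le> r"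
  by (cases x) auto

lemma cs_insert_le:
  assumes s: "sorted_wrt (<) s" "set s \<subseteq> {a..c}"
  shows "cs g s \<le> cs g (filter (\<lambda>x. x < c) s @ [c])"
proof -
  let ?A = "filter (\<lambda>x. x < c) s" and ?B = "filter (\<lambda>x. \<not> x < c) s"
  have "cs g s = cs g (?A @ ?B)" using sorted_split[OF s(1), of c] by simp
  also have "\<dots> \<le> cs g (?A @ [c]) + cs g (c # ?B)" by (rule cs_split_le)
  also have "cs g (c # ?B) = 0" using s(2) by (intro cs_const) auto
  finally show ?thesis by simp
qed

lemma SA:
  assumes "t1 \<le> c" "c \<le> y" "curve_length g t1 y \<noteq> \<infinity>"
  shows "real_of_ereal (curve_length g t1 c) + norm (g y - g c) \<le> real_of_ereal (curve_length g t1 y)"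
proof (cases "c = y")
  case True then show ?thesis by simp
next
  case False
  with assms have cy: "c < y" by simp
  define R where "R = real_of_ereal (curve_length g t1 y)"
  have Req: "curve_length g t1 y = ereal R"
    unfolding R_def using assms(3) cl_nonneg[of g t1 y] by (cases "curve_length g t1 y") auto
  have "curve_length g t1 c \<le> ereal (R - norm (g y - g c))"
  proof (rule cl_le)
    fix s assume s: "sorted_wrt (<) s" "set s \<subseteq> {t1..c}"
    let ?A = "filter (\<lambda>x. x < c) s"
    have "cs g s \<le> cs g (?A @ [c])" by (rule cs_insert_le[OF s])
    moreover have "cs g (?A @ [c, y]) = cs g (?A @ [c]) + norm (g c - g y)"
      using cs_append[of g ?A c "[y]"] by simp
    moreover have "ereal (cs g (?A @ [c, y])) \<le> curve_length g t1 y"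
      apply (rule cl_upper)
      using s cy assms(1) by (auto simp: sorted_wrt_append sorted_wrt_filter)
    ultimately show "cs g s \<le> R - norm (g y - g c)"
      using Req by (simp add: norm_minus_commute)
  qed
  then have "real_of_ereal (curve_length g t1 c) \<le> R - norm (g y - g c)"
    by (intro real_le cl_nonneg)
  then show ?thesis unfolding R_def by simp
qed


lemma core_pos:
  fixes g :: "real \<Rightarrow> 'a::real_inner"
  assumes I: "is_interval I" and cont: "continuous_on I g"
    and D: "\<forall>\<tau>\<in>I. (g has_vector_derivative g' \<tau>) (at \<tau> within (I \<inter> {\<tau>..})) \<and>
        (\<forall>t\<in>I. t < \<tau> \<longrightarrow> inner (g' \<tau>) (g t - g \<tau>) \<le> lam * norm (g' \<tau>) * norm (g t - g \<tau>))"
    and t1: "t1 \<in> I" and aI: "a \<in> I" and bI: "b \<in> I" and t1a: "t1 \<le> a" and ab: "a \<le> b"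
    and lam: "0 \<le> lam" "lam < 1"
    and L: "\<And>c y. a \<le> c \<Longrightarrow> c \<le> y \<Longrightarrow> y \<le> b \<Longrightarrow> lam * L c + lam * norm (g y - g c) \<le> lam * L y"
  shows "norm (g t1 - g a) + lam * L a \<le> norm (g t1 - g b) + lam * L b"
proof (rule dini[OF ab, where F = "\<lambda>\<tau>. norm (g t1 - g \<tau>) + lam * L \<tau>"])
  have inI: "z \<in> I" if "a \<le> z" "z \<le> b" for z using mem_is_interval_1_I[OF I aI bI that] .
  fix c e :: real assume c: "a < c" "c \<le> b" and e: "e > 0"
  have cI: "c \<in> I" using inI c by auto
  from cont cI e obtain d where d: "d > 0" "\<forall>x'\<in>I. dist x' c < d \<longrightarrow> dist (g x') (g c) < e"
    unfolding continuous_on_iff by blast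
  show "\<exists>d>0. \<forall>x. c - d < x \<and> x < c \<and> a \<le> x \<longrightarrow>
      norm (g t1 - g x) + lam * L x \<le> norm (g t1 - g c) + lam * L c + e"
  proof (intro exI[of _ d] conjI allI impI d(1))
    fix x assume x: "c - d < x \<and> x < c \<and> a \<le> x"
    then have xI: "x \<in> I" using inI c by auto
    have "norm (g x - g c) < e" using d(2) xI x by (auto simp: dist_norm)
    moreover have "norm (g t1 - g x) \<le> norm (g t1 - g c) + norm (g c - g x)" by (rule norm_tri3)
    moreover have "lam * L x + lam * norm (g c - g x) \<le> lam * L c" using L x c by auto
    moreover have "0 \<le> lam * norm (g c - g x)" using lam by simp
    ultimately show "norm (g t1 - g x) + lam * L x \<le> norm (g t1 - g c) + lam * L c + e"
      by (simp add: norm_minus_commute)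
  qed
next
  have inI: "z \<in> I" if "a \<le> z" "z \<le> b" for z using mem_is_interval_1_I[OF I aI bI that] .
  fix c e :: real assume c: "a \<le> c" "c < b" and e: "e > 0"
  have cI: "c \<in> I" using inI c by auto
  have dl: "e / 2 > 0" using e by simp
  from key[of g "g' c" c I lam t1 "e/2"] D cI t1a c t1 lam dl obtain d where d: "d > 0"
    "\<forall>y\<in>I. c < y \<and> y < c + d \<longrightarrow>
      norm (g t1 - g c) - lam * (y - c) * norm (g' c) - e/2 * (y - c) \<le> norm (g t1 - g y) \<and>
      norm (g y - g c) \<le> (y - c) * norm (g' c) + e/2 * (y - c) \<and>
      (y - c) * norm (g' c) - e/2 * (y - c) \<le> norm (g y - g c)" by auto
  show "\<exists>d>0. \<forall>y. c < y \<and> y < c + d \<and> y \<le> b \<longrightarrow>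
      norm (g t1 - g c) + lam * L c - e * (y - c) \<le> norm (g t1 - g y) + lam * L y"
  proof (intro exI[of _ d] conjI allI impI d(1))
    fix y assume y: "c < y \<and> y < c + d \<and> y \<le> b"
    then have yI: "y \<in> I" using inI c by auto
    define h where "h = y - c"
    have hp: "h > 0" using y h_def by simp
    have N1: "norm (g t1 - g c) - lam * h * norm (g' c) - e/2 * h \<le> norm (g t1 - g y)"
      and N3: "h * norm (g' c) - e/2 * h \<le> norm (g y - g c)"
      using d(2) yI y unfolding h_def by auto
    have "lam * (h * norm (g' c) - e/2 * h) \<le> lam * norm (g y - g c)"
      using N3 lam by (intro mult_left_mono) auto
    moreover have "lam * L c + lam * norm (g y - g c) \<le> lam * L y" using L c y by auto
    moreover have "lam * (e/2 * h) \<le> e/2 * h" using lam hp e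
      using mult_right_mono[of lam 1 "e/2*h"] by simp
    ultimately have "norm (g t1 - g c) + lam * L c - e * h \<le> norm (g t1 - g y) + lam * L y"
      using N1 by (simp add: algebra_simps)
    then show "norm (g t1 - g c) + lam * L c - e * (y - c) \<le> norm (g t1 - g y) + lam * L y"
      unfolding h_def .
  qed
qed

lemma core_H:
  fixes g :: "real \<Rightarrow> 'a::real_inner"
  assumes I: "is_interval I" and cont: "continuous_on I g"
    and D: "\<forall>\<tau>\<in>I. (g has_vector_derivative g' \<tau>) (at \<tau> within (I \<inter> {\<tau>..})) \<and>
        (\<forall>t\<in>I. t < \<tau> \<longrightarrow> inner (g' \<tau>) (g t - g \<tau>) \<le> lam * norm (g' \<tau>) * norm (g t - g \<tau>))"
    and t1: "t1 \<in> I" and aI: "a \<in> I" and bI: "b \<in> I" and t1a: "t1 \<le> a" and ab: "a \<le> b"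
    and lam: "-1 \<le> lam" "lam < 0"
  shows "- lam * norm (g b - g a) \<le> norm (g t1 - g b) - norm (g t1 - g a)"
proof -
  have "norm (g t1 - g a) - (- lam) * norm (g a - g a) \<le> norm (g t1 - g b) - (- lam) * norm (g b - g a)"
  proof (rule dini[OF ab, where F = "\<lambda>\<tau>. norm (g t1 - g \<tau>) - (- lam) * norm (g \<tau> - g a)"])
    have inI: "z \<in> I" if "a \<le> z" "z \<le> b" for z using mem_is_interval_1_I[OF I aI bI that] .
    fix c e :: real assume c: "a < c" "c \<le> b" and e: "e > 0"
    have cI: "c \<in> I" using inI c by auto
    have "continuous_on I (\<lambda>\<tau>. norm (g t1 - g \<tau>) - (- lam) * norm (g \<tau> - g a))"
      by (intro continuous_intros cont)
    with cI e obtain d where d: "d > 0" "\<forall>x'\<in>I. dist x' c < d \<longrightarrow>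
       dist (norm (g t1 - g x') - (- lam) * norm (g x' - g a)) (norm (g t1 - g c) - (- lam) * norm (g c - g a)) < e"
      unfolding continuous_on_iff by blast
    show "\<exists>d>0. \<forall>x. c - d < x \<and> x < c \<and> a \<le> x \<longrightarrow>
      norm (g t1 - g x) - (- lam) * norm (g x - g a) \<le> norm (g t1 - g c) - (- lam) * norm (g c - g a) + e"
    proof (intro exI[of _ d] conjI allI impI d(1))
      fix x assume x: "c - d < x \<and> x < c \<and> a \<le> x"
      then have xI: "x \<in> I" using inI c by auto
      show "norm (g t1 - g x) - (- lam) * norm (g x - g a) \<le> norm (g t1 - g c) - (- lam) * norm (g c - g a) + e"
        using d(2) xI x by (auto simp: dist_real_def)
    qed
  next
    have inI: "z \<in> I" if "a \<le> z" "z \<le> b" for z using mem_is_interval_1_I[OF I aI bI that] .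
    fix c e :: real assume c: "a \<le> c" "c < b" and e: "e > 0"
    have cI: "c \<in> I" using inI c by auto
    have dl: "e / 2 > 0" using e by simp
    from key[of g "g' c" c I lam t1 "e/2"] D cI t1a c t1 lam dl obtain d where d: "d > 0"
      "\<forall>y\<in>I. c < y \<and> y < c + d \<longrightarrow>
        norm (g t1 - g c) - lam * (y - c) * norm (g' c) - e/2 * (y - c) \<le> norm (g t1 - g y) \<and>
        norm (g y - g c) \<le> (y - c) * norm (g' c) + e/2 * (y - c) \<and>
        (y - c) * norm (g' c) - e/2 * (y - c) \<le> norm (g y - g c)" by auto
    show "\<exists>d>0. \<forall>y. c < y \<and> y < c + d \<and> y \<le> b \<longrightarrow>
        norm (g t1 - g c) - (- lam) * norm (g c - g a) - e * (y - c) \<le> norm (g t1 - g y) - (- lam) * norm (g y - g a)"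
    proof (intro exI[of _ d] conjI allI impI d(1))
      fix y assume y: "c < y \<and> y < c + d \<and> y \<le> b"
      then have yI: "y \<in> I" using inI c by auto
      define h where "h = y - c"
      have hp: "h > 0" using y h_def by simp
      have N1: "norm (g t1 - g c) - lam * h * norm (g' c) - e/2 * h \<le> norm (g t1 - g y)"
        and N2: "norm (g y - g c) \<le> h * norm (g' c) + e/2 * h"
        using d(2) yI y unfolding h_def by auto
      have T: "norm (g y - g a) \<le> norm (g y - g c) + norm (g c - g a)" by (rule norm_tri3)
      have "(- lam) * norm (g y - g a) \<le> (- lam) * (norm (g c - g a) + h * norm (g' c) + e/2 * h)"
        using T N2 lam by (intro mult_left_mono) auto
      moreover have "(- lam) * (e/2 * h) \<le> e/2 * h" using lam hp e
        using mult_right_mono[of "- lam" 1 "e/2*h"] by simp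
      ultimately have "norm (g t1 - g c) - (- lam) * norm (g c - g a) - e * h \<le> norm (g t1 - g y) - (- lam) * norm (g y - g a)"
        using N1 by (simp add: algebra_simps)
      then show "norm (g t1 - g c) - (- lam) * norm (g c - g a) - e * (y - c) \<le> norm (g t1 - g y) - (- lam) * norm (g y - g a)"
        unfolding h_def .
    qed
  qed
  then show ?thesis by simp
qed


theorem lemma4p1:
  fixes \<gamma> :: "real \<Rightarrow> 'a::euclidean_space" and lam :: real and I :: "real set"
  assumes "-1 \<le> lam" and "lam < 1"
    and "is_eel lam I \<gamma>"
    and "t1 \<in> I"
  shows "mono_on (I \<inter> {t1..})
           (\<lambda>t. ereal (norm (\<gamma> t1 - \<gamma> t)) + ereal lam * curve_length \<gamma> t1 t)"
proof -
  note t1 = assms(4)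
  from assms(3) obtain g' where I: "is_interval I" and cont: "continuous_on I \<gamma>"
    and D0: "\<forall>\<tau>\<in>I. (\<gamma> has_vector_derivative g' \<tau>) (at \<tau> within (I \<inter> {\<tau>..})) \<and> g' \<tau> \<noteq> 0 \<and>
        (\<forall>t\<in>I. t < \<tau> \<longrightarrow> inner (g' \<tau>) (\<gamma> t - \<gamma> \<tau>) \<le> lam * norm (g' \<tau>) * norm (\<gamma> t - \<gamma> \<tau>))"
    unfolding is_eel_def by blast
  have D: "\<forall>\<tau>\<in>I. (\<gamma> has_vector_derivative g' \<tau>) (at \<tau> within (I \<inter> {\<tau>..})) \<and>
        (\<forall>t\<in>I. t < \<tau> \<longrightarrow> inner (g' \<tau>) (\<gamma> t - \<gamma> \<tau>) \<le> lam * norm (g' \<tau>) * norm (\<gamma> t - \<gamma> \<tau>))"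
    using D0 by blast
  let ?l = "curve_length \<gamma> t1"
  show ?thesis
    unfolding mono_on_def
  proof (intro allI impI)
    fix a b assume ab: "a \<in> I \<inter> {t1..} \<and> b \<in> I \<inter> {t1..} \<and> a \<le> b"
    then have aI: "a \<in> I" and bI: "b \<in> I" and t1a: "t1 \<le> a" and ab: "a \<le> b" by auto
    have inI: "z \<in> I" if "t1 \<le> z" "z \<le> y" "y \<in> I" for z y using mem_is_interval_1_I[OF I t1 that(3) that(1,2)] .
    show "ereal (norm (\<gamma> t1 - \<gamma> a)) + ereal lam * ?l a \<le> ereal (norm (\<gamma> t1 - \<gamma> b)) + ereal lam * ?l b"
    proof (cases "lam < 0")
      case neg: True
      define G where "G \<tau> = norm (\<gamma> t1 - \<gamma> \<tau>) / (- lam)" for \<tau>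
      have HG: "norm (\<gamma> y - \<gamma> x) \<le> G y - G x" if "x \<in> I" "y \<in> I" "t1 \<le> x" "x \<le> y" for x y
      proof -
        have "- lam * norm (\<gamma> y - \<gamma> x) \<le> norm (\<gamma> t1 - \<gamma> y) - norm (\<gamma> t1 - \<gamma> x)"
          by (rule core_H[OF I cont D t1 that]) (use assms neg in auto)
        moreover have "0 < - lam" using neg by simp
        ultimately have "norm (\<gamma> y - \<gamma> x) \<le> (norm (\<gamma> t1 - \<gamma> y) - norm (\<gamma> t1 - \<gamma> x)) / (- lam)"
          using pos_le_divide_eq[of "- lam" "norm (\<gamma> y - \<gamma> x)"] by (simp add: mult.commute)
        then show ?thesis unfolding G_def by (simp add: diff_divide_distrib)
      qed
      have G0: "G x \<ge> 0" for x unfolding G_def using neg by (simp add: divide_nonneg_neg)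
      have sortedI: "sorted l" if "sorted_wrt (<) l" for l :: "real list"
        using that by (rule strict_sorted_imp_sorted)
      have fin: "?l \<tau> \<le> ereal (G \<tau>)" if "\<tau> \<in> I" "t1 \<le> \<tau>" for \<tau>
      proof (rule cl_le)
        fix s assume s: "sorted_wrt (<) s" "set s \<subseteq> {t1..\<tau>}"
        show "cs \<gamma> s \<le> G \<tau>"
        proof (cases "s = []")
          case True then show ?thesis using G0 by simp
        next
          case False
          have sI: "x \<in> I \<and> t1 \<le> x \<and> x \<le> \<tau>" if "x \<in> set s" for x using s(2) that inI[of x \<tau>] \<open>\<tau> \<in> I\<close> by auto
          have "cs \<gamma> s \<le> G (last s) - G (hd s)"
            by (rule cs_G[OF sortedI[OF s(1)] False]) (use HG sI in auto)
          moreover have "G (last s) \<le> G \<tau>" using HG[of "last s" \<tau>] sI[of "last s"] False that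
            by (smt (verit) last_in_set norm_ge_zero)
          ultimately show ?thesis using G0[of "hd s"] by simp
        qed
      qed
      define A where "A = real_of_ereal (?l a)"
      define B where "B = real_of_ereal (?l b)"
      have Aeq: "?l a = ereal A" unfolding A_def using fin[OF aI t1a] cl_nonneg[of \<gamma> t1 a]
        by (cases "?l a") auto
      have Beq: "?l b = ereal B" unfolding B_def using fin[OF bI] t1a ab cl_nonneg[of \<gamma> t1 b]
        by (cases "?l b") auto
      have "?l b \<le> ereal (A + (G b - G a))"
      proof (rule cl_le)
        fix s assume s: "sorted_wrt (<) s" "set s \<subseteq> {t1..b}"
        let ?A = "filter (\<lambda>x. x < a) s" and ?B = "filter (\<lambda>x. \<not> x < a) s"
        have "cs \<gamma> s = cs \<gamma> (?A @ ?B)" using sorted_split[OF s(1), of a] by simp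
        also have "\<dots> \<le> cs \<gamma> (?A @ [a]) + cs \<gamma> (a # ?B)" by (rule cs_split_le)
        finally have c1: "cs \<gamma> s \<le> cs \<gamma> (?A @ [a]) + cs \<gamma> (a # ?B)" .
        have "ereal (cs \<gamma> (?A @ [a])) \<le> ?l a"
          apply (rule cl_upper)
          using s t1a by (auto simp: sorted_wrt_append sorted_wrt_filter)
        then have c2: "cs \<gamma> (?A @ [a]) \<le> A" using Aeq by simp
        have srt: "sorted (a # ?B)"
          using sortedI[OF s(1)] by (auto simp: sorted_wrt_filter)
        have sB: "x \<in> I \<and> t1 \<le> x \<and> a \<le> x \<and> x \<le> b" if "x \<in> set (a # ?B)" for x
          using that s(2) inI[of x b] bI t1a ab aI by auto
        have "cs \<gamma> (a # ?B) \<le> G (last (a # ?B)) - G (hd (a # ?B))"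
          by (rule cs_G[OF srt]) (use HG sB in auto)
        moreover have "G (last (a # ?B)) \<le> G b"
          using HG[of "last (a # ?B)" b] sB[of "last (a # ?B)"] bI
          by (smt (verit) last_in_set list.distinct(1) norm_ge_zero)
        ultimately have c3: "cs \<gamma> (a # ?B) \<le> G b - G a" by simp
        show "cs \<gamma> s \<le> A + (G b - G a)" using c1 c2 c3 by simp
      qed
      then have BA: "B \<le> A + (G b - G a)" using Beq by simp
      have "lam * (A + (G b - G a)) \<le> lam * B"
        using BA neg by (intro mult_left_mono_neg) auto
      moreover have "lam * (G b - G a) = norm (\<gamma> t1 - \<gamma> a) - norm (\<gamma> t1 - \<gamma> b)"
        unfolding G_def using neg by (simp add: field_simps)
      ultimately have "norm (\<gamma> t1 - \<gamma> a) + lam * A \<le> norm (\<gamma> t1 - \<gamma> b) + lam * B"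
        by (simp add: algebra_simps)
      then show ?thesis using Aeq Beq by simp
    next
      case False
      then have lam0: "0 \<le> lam" by simp
      show ?thesis
      proof (cases "lam = 0")
        case True
        have "norm (\<gamma> t1 - \<gamma> a) + lam * 0 \<le> norm (\<gamma> t1 - \<gamma> b) + lam * 0"
          by (rule core_pos[OF I cont D t1 aI bI t1a ab lam0 assms(2), where L = "\<lambda>_. 0"])
            (use True in auto)
        then show ?thesis using True by (simp flip: zero_ereal_def)
      next
        case lpos: False
        show ?thesis
        proof (cases "?l b = \<infinity>")
          case True
          then show ?thesis using lpos lam0 by simp
        next
          case fb: False
          define L where "L \<tau> = real_of_ereal (?l \<tau>)" for \<tau>
          have fin: "?l \<tau> = ereal (L \<tau>)" if "\<tau> \<le> b" for \<tau>
            using cl_mono[OF that, of \<gamma> t1] fb cl_nonneg[of \<gamma> t1 \<tau>] unfolding L_def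
            by (cases "?l \<tau>") auto
          have "norm (\<gamma> t1 - \<gamma> a) + lam * L a \<le> norm (\<gamma> t1 - \<gamma> b) + lam * L b"
          proof (rule core_pos[OF I cont D t1 aI bI t1a ab lam0 assms(2)])
            fix c y assume cy: "a \<le> c" "c \<le> y" "y \<le> b"
            have fy: "?l y \<noteq> \<infinity>" using fin[OF cy(3)] by simp
            have "L c + norm (\<gamma> y - \<gamma> c) \<le> L y"
              unfolding L_def by (rule SA) (use cy t1a fy in auto)
            then have "lam * (L c + norm (\<gamma> y - \<gamma> c)) \<le> lam * L y"
              using lam0 by (rule mult_left_mono)
            then show "lam * L c + lam * norm (\<gamma> y - \<gamma> c) \<le> lam * L y" by (simp add: algebra_simps)
          qed
          then show ?thesis using fin[of a] fin[of b] ab by simp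
        qed
      qed
    qed
  qed
qed

end
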